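(* Let $d_x, d_1, d_2 \ge 1$ be integers, let $\sigma:\mathbb{R}\to\mathbb{R}$ be a continuous piecewise linear function with $p\ge 2$ linear pieces, and let $\alpha_1,\alpha_2\in(0,1]$ be such that $\alpha_1 d_1$ and $\alpha_2 d_2$ are positive integers. Consider the architecture of fully connected networks $f_W:\mathbb{R}^{d_x}\to\mathbb{R}$ with two hidden layers of widths $\alpha_1 d_1$ and $\alpha_2 d_2$ (obtained by removing entire neurons, i.e. structured pruning), $$f_W(x) = W^3\,\sigma\big(W^2\,\sigma(W^1 x + b^1) + b^2\big) + b^3,$$ with $\sigma$ applied coordinatewise and $W^1\in\mathbb{R}^{\alpha_1 d_1\times d_x}$, $W^2\in\mathbb{R}^{\alpha_2 d_2\times \alpha_1 d_1}$, $W^3\in\mathbb{R}^{1\times \alpha_2 d_2}$, $b^1,b^2,b^3$ of matching dimensions. Then the memorization capacity of this architecture is at most $$\alpha_1\alpha_2 d_1 d_2\, p(p-1) + \alpha_2 d_2(p-1) + 2.$$ In particular, for ReLU ($p=2$) it is at most $2\alpha_1\alpha_2 d_1 d_2 + \alpha_2 d_2 + 2$.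
   Context: Memorization capacity: for a network architecture $f_W$ with learnable parameters $W$ and input dimension $d_x$, the memorization capacity is the largest $N$ such that for every choice of inputs $x_1,\dots,x_N\in\mathbb{R}^{d_x}$ (pairwise distinct) and every choice of labels $y_1,\dots,y_N\in[-1,1]$, there exist parameters $W$ with $f_W(x_i)=y_i$ for all $1\le i\le N$. A function $\mathbb{R}\to\mathbb{R}$ has "$p$ linear pieces" if $\mathbb{R}$ can be partitioned into $p$ intervals on each of which it is affine (and not fewer). *)

theory Defs
  imports "HOL-Analysis.Analysis"
begin

text \<open>\<open>\<sigma>\<close> can be written as an affine function on each of at most \<open>n\<close> intervals
  partitioning \<open>\<real>\<close> (pieces are allowed to be empty, so this is monotone in \<open>n\<close>).\<close>
definition affine_pieces_le :: "(real \<Rightarrow> real) \<Rightarrow> nat \<Rightarrow> bool" where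
  "affine_pieces_le \<sigma> n \<longleftrightarrow>
     (\<exists>I :: nat \<Rightarrow> real set.
        (\<forall>i<n. is_interval (I i)) \<and>
        (\<forall>i<n. \<forall>j<n. i \<noteq> j \<longrightarrow> I i \<inter> I j = {}) \<and>
        (\<Union>i<n. I i) = UNIV \<and>
        (\<forall>i<n. \<exists>a b. \<forall>x\<in>I i. \<sigma> x = a * x + b))"

definition linear_pieces :: "(real \<Rightarrow> real) \<Rightarrow> nat \<Rightarrow> bool" where
  "linear_pieces \<sigma> p \<longleftrightarrow> affine_pieces_le \<sigma> p \<and> \<not> affine_pieces_le \<sigma> (p - 1)"

text \<open>Row \<open>j\<close> of \<open>W1\<close> is \<open>W1 j\<close>;
  \<open>W2 m j\<close> is the entry (m,j) of \<open>W2\<close>; \<open>W3 m\<close> the m-th entry of \<open>W3\<close>.\<close>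
definition net2 ::
  "(real \<Rightarrow> real) \<Rightarrow> nat \<Rightarrow> nat \<Rightarrow> (nat \<Rightarrow> real^'n::finite) \<Rightarrow> (nat \<Rightarrow> real) \<Rightarrow>
   (nat \<Rightarrow> nat \<Rightarrow> real) \<Rightarrow> (nat \<Rightarrow> real) \<Rightarrow> (nat \<Rightarrow> real) \<Rightarrow> real \<Rightarrow> real^'n \<Rightarrow> real" where
  "net2 \<sigma> k1 k2 W1 b1 W2 b2 W3 b3 x =
     (\<Sum>m<k2. W3 m * \<sigma> ((\<Sum>j<k1. W2 m j * \<sigma> (W1 j \<bullet> x + b1 j)) + b2 m)) + b3"

definition memorizes :: "'n::finite itself \<Rightarrow> (real \<Rightarrow> real) \<Rightarrow> nat \<Rightarrow> nat \<Rightarrow> nat \<Rightarrow> bool" where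
  "memorizes _ \<sigma> k1 k2 N \<longleftrightarrow>
     (\<forall>(X :: nat \<Rightarrow> real^'n) (y :: nat \<Rightarrow> real).
        inj_on X {..<N} \<and> (\<forall>i<N. y i \<in> {-1..1}) \<longrightarrow>
        (\<exists>W1 b1 W2 b2 W3 b3. \<forall>i<N. net2 \<sigma> k1 k2 W1 b1 W2 b2 W3 b3 (X i) = y i))"

end

theory Submission
  imports Defs
begin


lemma sign_aux:
  fixes P D c g h :: real
  assumes "P * D < 0" "D * (c * g) < 0" "g > 0" "h \<ge> 0"
  shows "P * (D - c * h) < 0"
proof -
  have dc: "D * c < 0" using assms(2,3)
    by (metis mult.assoc mult_less_0_iff not_less_iff_gr_or_eq)
  have "(D - c*h) * D > 0"
  proof -
    have "(D - c*h) * D = D*D - (D*c)*h" by (simp add: algebra_simps)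
    moreover have "D*D > 0" using dc by (metis mult_eq_0_iff not_less_iff_gr_or_eq not_square_less_zero)
    moreover have "(D*c)*h \<le> 0" using dc assms(4) by (simp add: mult_nonpos_nonneg)
    ultimately show ?thesis by linarith
  qed
  then have "(P*D) * ((D - c*h) * D) < 0" using assms(1) by (simp add: mult_neg_pos)
  then have "(P * (D - c*h)) * (D*D) < 0" by (simp add: algebra_simps)
  then show ?thesis by (metis mult_less_0_iff not_square_less_zero)
qed

lemma zig:
  fixes f :: "real \<Rightarrow> real"
  assumes "finite S"
  shows "\<And>R x n. (\<And>a b. a<b \<Longrightarrow> b \<le> R \<Longrightarrow> S \<inter> {a<..<b} = {} \<Longrightarrow> \<exists>c d. \<forall>t\<in>{a..b}. f t = c*t+d)
    \<Longrightarrow> (\<And>j. j<n \<Longrightarrow> x j < x (Suc j)) \<Longrightarrow> x n \<le> R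
    \<Longrightarrow> (\<And>j. j+2 \<le> n \<Longrightarrow> (f (x (Suc j)) - f (x j)) * (f (x (Suc (Suc j))) - f (x (Suc j))) < 0)
    \<Longrightarrow> n \<le> card S + 1"
  using assms
proof (induction S rule: finite_linorder_max_induct)
  case empty
  show ?case
  proof (rule ccontr)
    assume "\<not> n \<le> card {} + 1"
    then have "2 \<le> n" by simp
    then obtain m0 where "n = 2 + m0" using le_Suc_ex by blast
    then obtain m where n: "n = Suc (Suc m)" by simp
    have lt1: "x m < x (Suc m)" and lt2: "x (Suc m) < x n" using empty(2)[of m] empty(2)[of "Suc m"] n by auto
    obtain c d where cd: "\<forall>t\<in>{x m..x n}. f t = c*t+d" using empty(1)[of "x m" "x n"] lt1 lt2 empty(3) by auto
    have "(f (x (Suc m)) - f (x m)) * (f (x n) - f (x (Suc m))) < 0" using empty(4)[of m] n by auto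
    moreover have "f (x (Suc m)) - f (x m) = c * (x (Suc m) - x m)" using cd lt1 lt2 by (auto simp: algebra_simps)
    moreover have "f (x n) - f (x (Suc m)) = c * (x n - x (Suc m))" using cd lt1 lt2 by (auto simp: algebra_simps)
    ultimately have "(c*c) * ((x (Suc m) - x m) * (x n - x (Suc m))) < 0" by (simp add: algebra_simps)
    moreover have "(x (Suc m) - x m) * (x n - x (Suc m)) > 0" using lt1 lt2 by simp
    ultimately show False by (meson less_imp_le mult_nonneg_nonneg not_le zero_le_square)
  qed
next
  case (insert b A R x n)
  have bA: "b \<notin> A" using insert(2) by auto
  have cardS: "card (insert b A) = card A + 1" using bA insert(1) by simp
  show ?case
  proof (cases "x n \<le> b")
    case True
    have "n \<le> card A + 1"
    proof (rule insert(3)[of "x n" n x])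
      fix a b' assume "a < b'" "b' \<le> x n" "A \<inter> {a<..<b'} = {}"
      then show "\<exists>c d. \<forall>t\<in>{a..b'}. f t = c * t + d" using insert(4)[of a b'] insert(6) True by auto
    qed (use insert(5,7) in auto)
    then show ?thesis using cardS by simp
  next
    case False
    show ?thesis
    proof (cases "n \<ge> 2")
      case False then show ?thesis by simp
    next
      case True
      then obtain m0 where "n = 2 + m0" using le_Suc_ex by blast
      then obtain m where n: "n = Suc (Suc m)" by simp
      have lt1: "x m < x (Suc m)" and lt2: "x (Suc m) < x n" using insert(5)[of m] insert(5)[of "Suc m"] n by auto
      show ?thesis
      proof (cases "x (Suc m) \<le> b")
        case True
        have "Suc m \<le> card A + 1"
        proof (rule insert(3)[of b "Suc m" x])
          fix a b' assume "a < b'" "b' \<le> b" "A \<inter> {a<..<b'} = {}"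
          then show "\<exists>c d. \<forall>t\<in>{a..b'}. f t = c * t + d" using insert(4)[of a b'] insert(6) \<open>\<not> x n \<le> b\<close> by auto
        next
          fix j assume "j + 2 \<le> Suc m" then show "(f (x (Suc j)) - f (x j)) * (f (x (Suc (Suc j))) - f (x (Suc j))) < 0"
            using insert(7)[of j] n by auto
        qed (use insert(5) True n in auto)
        then show ?thesis using cardS n by simp
      next
        case xb: False
        have fr: "insert b A \<inter> {b<..<x n} = {}" using insert(2) by auto
        obtain c d where cd: "\<forall>t\<in>{b..x n}. f t = c*t+d" using insert(4)[OF _ insert(6) fr] False by auto
        have alt: "(f (x (Suc m)) - f (x m)) * (f (x n) - f (x (Suc m))) < 0" using insert(7)[of m] n by auto
        have e2: "f (x n) - f (x (Suc m)) = c * (x n - x (Suc m))" using cd lt2 xb by (auto simp: algebra_simps)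
        show ?thesis
        proof (cases "b \<le> x m")
          case True
          have "f (x (Suc m)) - f (x m) = c * (x (Suc m) - x m)" using cd lt1 lt2 True by (auto simp: algebra_simps)
          with alt e2 have "(c*c) * ((x (Suc m) - x m) * (x n - x (Suc m))) < 0" by (simp add: algebra_simps)
          moreover have "(x (Suc m) - x m) * (x n - x (Suc m)) > 0" using lt1 lt2 by simp
          ultimately show ?thesis by (meson less_imp_le mult_nonneg_nonneg not_le zero_le_square)
        next
          case bm: False
          define x' where "x' = x(Suc m := b)"
          have "Suc m \<le> card A + 1"
          proof (rule insert(3)[of b "Suc m" x'])
            fix a b' assume "a < b'" "b' \<le> b" "A \<inter> {a<..<b'} = {}"
            then show "\<exists>c d. \<forall>t\<in>{a..b'}. f t = c * t + d" using insert(4)[of a b'] insert(6) \<open>\<not> x n \<le> b\<close> by auto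
          next
            fix j assume "j < Suc m" then show "x' j < x' (Suc j)"
              using insert(5)[of j] n bm unfolding x'_def by (cases "Suc j = Suc m") auto
          next
            show "x' (Suc m) \<le> b" by (simp add: x'_def)
          next
            fix j assume j: "j + 2 \<le> Suc m"
            show "(f (x' (Suc j)) - f (x' j)) * (f (x' (Suc (Suc j))) - f (x' (Suc j))) < 0"
            proof (cases "Suc (Suc j) = Suc m")
              case False
              then show ?thesis using insert(7)[of j] n j unfolding x'_def by auto
            next
              case True
              hence mj: "m = Suc j" by simp
              have P: "(f (x (Suc j)) - f (x j)) * (f (x (Suc m)) - f (x m)) < 0" using insert(7)[of j] n mj by auto
              have fb: "f b = f (x (Suc m)) - c * (x (Suc m) - b)" using cd xb lt2 by (auto simp: algebra_simps)
              have "(f (x (Suc j)) - f (x j)) * ((f (x (Suc m)) - f (x m)) - c * (x (Suc m) - b)) < 0"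
                by (rule sign_aux[where g = "x n - x (Suc m)"]) (use P mj alt e2 lt2 xb in auto)
              moreover have eq: "(f (x (Suc m)) - f (x m)) - c * (x (Suc m) - b) = f b - f (x m)" using fb by linarith
              ultimately have "(f (x (Suc j)) - f (x j)) * (f b - f (x m)) < 0" by simp
              then show ?thesis using mj unfolding x'_def by simp
            qed
          qed
          then show ?thesis using cardS n by simp
        qed
      qed
    qed
  qed
qed


definition pl :: "(real \<Rightarrow> real) \<Rightarrow> real set \<Rightarrow> bool" where
  "pl f S \<longleftrightarrow> (\<forall>a b. a < b \<longrightarrow> S \<inter> {a<..<b} = {} \<longrightarrow> (\<exists>c d. \<forall>t\<in>{a..b}. f t = c*t + d))"

lemma pl_affine: "pl (\<lambda>t. c*t + d) {}"
  unfolding pl_def by blast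

lemma pl_mono: "pl f S \<Longrightarrow> S \<subseteq> S' \<Longrightarrow> pl f S'"
  unfolding pl_def by blast

lemma pl_scale_add: "pl f S \<Longrightarrow> pl (\<lambda>t. k * f t + e) S"
  unfolding pl_def
proof (intro allI impI)
  fix a b assume "\<forall>a b. a < b \<longrightarrow> S \<inter> {a<..<b} = {} \<longrightarrow> (\<exists>c d. \<forall>t\<in>{a..b}. f t = c * t + d)" "a < b" "S \<inter> {a<..<b} = {}"
  then obtain c d where "\<forall>t\<in>{a..b}. f t = c * t + d" by blast
  then have "\<forall>t\<in>{a..b}. k * f t + e = (k*c) * t + (k*d + e)" by (simp add: algebra_simps)
  then show "\<exists>c d. \<forall>t\<in>{a..b}. k * f t + e = c * t + d" by blast
qed

lemma pl_add: "pl f S \<Longrightarrow> pl g T \<Longrightarrow> pl (\<lambda>t. f t + g t) (S \<union> T)"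
  unfolding pl_def
proof (intro allI impI)
  fix a b assume f: "\<forall>a b. a < b \<longrightarrow> S \<inter> {a<..<b} = {} \<longrightarrow> (\<exists>c d. \<forall>t\<in>{a..b}. f t = c * t + d)"
    and g: "\<forall>a b. a < b \<longrightarrow> T \<inter> {a<..<b} = {} \<longrightarrow> (\<exists>c d. \<forall>t\<in>{a..b}. g t = c * t + d)"
    and ab: "a < b" "(S \<union> T) \<inter> {a<..<b} = {}"
  obtain c d where cd: "\<forall>t\<in>{a..b}. f t = c * t + d" using f ab by blast
  obtain c' d' where cd': "\<forall>t\<in>{a..b}. g t = c' * t + d'" using g ab by blast
  have "\<forall>t\<in>{a..b}. f t + g t = (c+c') * t + (d + d')" using cd cd' by (simp add: algebra_simps)
  then show "\<exists>c d. \<forall>t\<in>{a..b}. f t + g t = c * t + d" by blast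
qed

lemma pl_sum: "finite I \<Longrightarrow> (\<forall>i\<in>I. pl (f i) (S i)) \<Longrightarrow> pl (\<lambda>t. \<Sum>i\<in>I. f i t) (\<Union>i\<in>I. S i)"
proof (induction I rule: finite_induct)
  case empty
  show ?case using pl_affine[of 0 0] by simp
next
  case (insert i I)
  have "pl (\<lambda>t. f i t + (\<Sum>i\<in>I. f i t)) (S i \<union> (\<Union>i\<in>I. S i))"
    using pl_add[of "f i" "S i"] insert by auto
  then show ?case using insert by simp
qed

lemma card_UN_bound: "finite I \<Longrightarrow> (\<forall>i\<in>I. finite (S i) \<and> card (S i) \<le> K) \<Longrightarrow>
   finite (\<Union>i\<in>I. S i) \<and> card (\<Union>i\<in>I. S i) \<le> card I * K"
proof -
  assume a: "finite I" "\<forall>i\<in>I. finite (S i) \<and> card (S i) \<le> K"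
  have "card (\<Union>i\<in>I. S i) \<le> (\<Sum>i\<in>I. card (S i))" by (rule card_UN_le[OF a(1)])
  also have "\<dots> \<le> card I * K" using sum_bounded_above[of I "\<lambda>i. card (S i)" K] a by simp
  finally show ?thesis using a by auto
qed

lemma sep_card:
  fixes A T :: "real set"
  assumes T: "finite T" and sep: "\<forall>x\<in>A. \<forall>y\<in>A. x < y \<longrightarrow> (\<exists>t\<in>T. x < t \<and> t < y)"
  shows "finite A \<and> card A \<le> card T + 1"
proof -
  have fin_b: "card B \<le> card T + 1" if B: "finite B" "B \<subseteq> A" for B
  proof (cases "B = {}")
    case True then show ?thesis by simp
  next
    case False
    define M where "M = Max B"
    have MB: "M \<in> B" using B False M_def by simp
    define h where "h a = Min {t\<in>T. a < t}" for a
    have hT: "h a \<in> T \<and> a < h a" if "a \<in> B - {M}" for a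
    proof -
      have "a \<le> M" using that B M_def by simp
      then have "a < M" using that by auto
      moreover have "a \<in> A" "M \<in> A" using that MB B by auto
      ultimately have "\<exists>t\<in>T. a < t \<and> t < M" using sep by blast
      then obtain t where "t \<in> T" "a < t" by blast
      then have ne: "{t\<in>T. a < t} \<noteq> {}" and fi: "finite {t\<in>T. a < t}" using T by auto
      have "Min {t\<in>T. a < t} \<in> {t\<in>T. a < t}" by (rule Min_in[OF fi ne])
      then show ?thesis unfolding h_def by simp
    qed
    have inj: "inj_on h (B - {M})"
    proof (rule inj_onI)
      fix a a' assume aa: "a \<in> B - {M}" "a' \<in> B - {M}" "h a = h a'"
      show "a = a'"
      proof (rule ccontr)
        assume ne: "a \<noteq> a'"
        have inA: "a \<in> A" "a' \<in> A" using aa B by auto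
        from ne consider "a < a'" | "a' < a" by linarith
        then show False
        proof cases
          case 1
          then obtain t where t: "t \<in> T" "a < t" "t < a'" using sep inA 1 by blast
          have "h a \<le> t" unfolding h_def using t T by (intro Min_le) auto
          then show False using hT[OF aa(2)] aa(3) t by simp
        next
          case 2
          then obtain t where t: "t \<in> T" "a' < t" "t < a" using sep inA 2 by blast
          have "h a' \<le> t" unfolding h_def using t T by (intro Min_le) auto
          then show False using hT[OF aa(1)] aa(3) t by simp
        qed
      qed
    qed
    have "card (B - {M}) \<le> card T"
      using card_inj_on_le[OF inj _ T] hT by blast
    moreover have "card B = card (B - {M}) + 1" using MB B
      by (metis One_nat_def add.right_neutral add_Suc_right card_Suc_Diff1)
    ultimately show ?thesis by simp
  qed
  have "finite A"
  proof (rule ccontr)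
    assume "infinite A"
    then obtain B where "B \<subseteq> A" "finite B" "card B = card T + 2"
      using infinite_arbitrarily_large by blast
    then show False using fin_b by fastforce
  qed
  then show ?thesis using fin_b by blast
qed


lemma pl_comp:
  fixes g \<sigma> :: "real \<Rightarrow> real"
  assumes g: "pl g T" and T: "finite T" and s: "pl \<sigma> Q" and Q: "finite Q"
  shows "\<exists>S'. finite S' \<and> card S' \<le> card T + card Q * (card T + 1) \<and> pl (\<lambda>t. \<sigma> (g t)) S'"
proof -
  define A where "A s = {x. x \<notin> T \<and> g x = s \<and> \<not> (\<exists>e>0. \<forall>y. dist y x < e \<longrightarrow> g y = s)}" for s
  have Afin: "finite (A s) \<and> card (A s) \<le> card T + 1" for s
  proof (rule sep_card[OF T], intro ballI impI)
    fix x y assume x: "x \<in> A s" and y: "y \<in> A s" and xy: "x < y"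
    show "\<exists>t\<in>T. x < t \<and> t < y"
    proof (rule ccontr)
      assume nt: "\<not> (\<exists>t\<in>T. x < t \<and> t < y)"
      obtain e0 where e0: "e0 > 0" "\<forall>t\<in>T. t \<noteq> x \<longrightarrow> e0 \<le> dist x t" using finite_set_avoid[OF T, of x] by blast
      define e where "e = min e0 (y - x)"
      have e: "e > 0" "e \<le> y - x" "e \<le> e0" using e0 xy by (auto simp: e_def)
      have "T \<inter> {x - e<..<y} = {}"
      proof (safe)
        fix t assume "t \<in> T" "t \<in> {x - e<..<y}"
        moreover have "x \<notin> T" using x by (simp add: A_def)
        ultimately have tx: "t \<noteq> x" by auto
        have "\<not> (x < t)" using nt \<open>t \<in> T\<close> \<open>t \<in> {x - e<..<y}\<close> by auto
        then have "t < x" using tx by linarith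
        then have "dist x t < e0" using e \<open>t \<in> {x - e<..<y}\<close> by (simp add: dist_real_def)
        moreover have "e0 \<le> dist x t" using e0(2) \<open>t \<in> T\<close> tx by blast
        ultimately show "t \<in> {}" by linarith
      qed
      moreover have "x - e < y" using e xy by linarith
      ultimately obtain c d where cd: "\<forall>t\<in>{x-e..y}. g t = c*t + d" using g unfolding pl_def by blast
      have "g x = s" "g y = s" using x y by (auto simp: A_def)
      then have "c * x + d = c * y + d" using cd e xy by auto
      then have c0: "c = 0" using xy by simp
      have "\<forall>z. dist z x < e \<longrightarrow> g z = s"
      proof (intro allI impI)
        fix z assume "dist z x < e"
        then have "z \<in> {x-e..y}" using e by (auto simp: dist_real_def)
        then show "g z = s" using cd c0 \<open>g x = s\<close> e xy by auto
      qed
      then show False using x e by (auto simp: A_def)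
    qed
  qed
  define S' where "S' = T \<union> (\<Union>s\<in>Q. A s)"
  have "finite (\<Union>s\<in>Q. A s) \<and> card (\<Union>s\<in>Q. A s) \<le> card Q * (card T + 1)"
    using card_UN_bound[OF Q, of A "card T + 1"] Afin by blast
  then have fin: "finite S'" and card: "card S' \<le> card T + card Q * (card T + 1)"
    unfolding S'_def using T card_Un_le[of T "\<Union>s\<in>Q. A s"] by auto
  have "pl (\<lambda>t. \<sigma> (g t)) S'"
    unfolding pl_def
  proof (intro allI impI)
    fix a b assume ab: "a < b" and free: "S' \<inter> {a<..<b} = {}"
    then obtain c d where cd: "\<forall>t\<in>{a..b}. g t = c*t + d" using g unfolding pl_def S'_def by blast
    show "\<exists>c d. \<forall>t\<in>{a..b}. \<sigma> (g t) = c * t + d"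
    proof (cases "c = 0")
      case True
      then have "\<forall>t\<in>{a..b}. \<sigma> (g t) = 0 * t + \<sigma> d" using cd by simp
      then show ?thesis by blast
    next
      case c: False
      define lo where "lo = min (g a) (g b)"
      define hi where "hi = max (g a) (g b)"
      have ga: "g a = c*a+d" and gb: "g b = c*b+d" using cd ab by auto
      have ord: "(c > 0 \<and> lo = c*a+d \<and> hi = c*b+d \<and> c*a < c*b) \<or> (c < 0 \<and> lo = c*b+d \<and> hi = c*a+d \<and> c*b < c*a)"
      proof (cases "c > 0")
        case True
        have "c*a < c*b" using mult_strict_left_mono[OF ab True] .
        then show ?thesis using True ga gb unfolding lo_def hi_def by (simp add: min_def max_def)
      next
        case False
        then have cn: "c < 0" using c by simp
        have "c*b < c*a" using mult_strict_left_mono_neg[OF ab cn] .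
        then show ?thesis using cn ga gb unfolding lo_def hi_def by (simp add: min_def max_def)
      qed
      have lohi: "lo < hi" using ord by linarith
      have noQ: "g x \<notin> Q" if x: "x \<in> {a<..<b}" for x
      proof
        assume gq: "g x \<in> Q"
        have "x \<notin> T" using x free unfolding S'_def by auto
        moreover have "\<not> (\<exists>e>0. \<forall>y. dist y x < e \<longrightarrow> g y = g x)"
        proof
          assume "\<exists>e>0. \<forall>y. dist y x < e \<longrightarrow> g y = g x"
          then obtain e where e: "e > 0" "\<forall>y. dist y x < e \<longrightarrow> g y = g x" by blast
          define m where "m = min e (b - x)"
          define y where "y = x + m / 2"
          have mm: "0 < m" "m \<le> e" "m \<le> b-x" using e x unfolding m_def by auto
          have y1: "x < y" unfolding y_def using mm(1) by simp
          have y2: "y < b" unfolding y_def using mm(1,3) by linarith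
          have "dist y x = m/2" unfolding y_def dist_real_def using mm(1) by simp
          then have y3: "dist y x < e" using mm(1,2) by linarith
          note y = y1 y2 y3
          then have "g y = g x" using e by blast
          moreover have "g y = c*y+d" "g x = c*x+d" using cd x y by auto
          ultimately show False using c y by simp
        qed
        ultimately have "x \<in> A (g x)" unfolding A_def by simp
        then show False using x free gq unfolding S'_def by auto
      qed
      have "Q \<inter> {lo<..<hi} = {}"
      proof safe
        fix u assume uQ: "u \<in> Q" and u: "u \<in> {lo<..<hi}"
        define x where "x = (u - d) / c"
        have gx: "c * x + d = u" using c by (simp add: x_def)
        have "x \<in> {a<..<b}"
        proof (cases "c > 0")
          case True
          then have "lo = c*a+d" "hi = c*b+d" using ord by auto
          then have "c*a < c*x" "c*x < c*b" using u gx by auto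
          then show ?thesis using True by simp
        next
          case False
          then have cn: "c < 0" using c by simp
          then have "lo = c*b+d" "hi = c*a+d" using ord by auto
          then have "c*b < c*x" "c*x < c*a" using u gx by auto
          then show ?thesis using cn by (simp add: mult_less_cancel_left)
        qed
        then have "g x = u" using cd gx by auto
        with noQ[OF \<open>x \<in> {a<..<b}\<close>] uQ show "u \<in> {}" by simp
      qed
      then obtain cs ds where cds: "\<forall>v\<in>{lo..hi}. \<sigma> v = cs * v + ds" using s lohi unfolding pl_def by blast
      have "\<forall>t\<in>{a..b}. \<sigma> (g t) = (cs*c) * t + (cs*d + ds)"
      proof
        fix t assume t: "t \<in> {a..b}"
        have "g t \<in> {lo..hi}"
        proof (cases "c > 0")
          case True
          then have "lo = c*a+d" "hi = c*b+d" using ord by auto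
          moreover have "c*a \<le> c*t" "c*t \<le> c*b" using t True by (auto intro: mult_left_mono)
          moreover have "g t = c*t+d" using cd t by blast
          ultimately show ?thesis by simp
        next
          case False
          then have cn: "c < 0" using c by simp
          then have "lo = c*b+d" "hi = c*a+d" using ord by auto
          moreover have "c*b \<le> c*t" "c*t \<le> c*a" using t cn by (auto intro: mult_left_mono_neg)
          moreover have "g t = c*t+d" using cd t by blast
          ultimately show ?thesis by simp
        qed
        then show "\<sigma> (g t) = (cs*c) * t + (cs*d + ds)" using cds cd t by (simp add: algebra_simps)
      qed
      then show ?thesis by blast
    qed
  qed
  then show ?thesis using fin card by blast
qed


lemma inf_between:
  fixes A B :: "real set"
  assumes "is_interval B" "u \<in> A" "v \<in> B" "u < v" "A \<inter> B = {}"
  shows "B \<noteq> {} \<and> bdd_below B \<and> u \<le> Inf B \<and> Inf B \<le> v"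
proof -
  have lb: "\<forall>w\<in>B. u \<le> w"
  proof
    fix w assume w: "w \<in> B"
    show "u \<le> w"
    proof (rule ccontr)
      assume "\<not> u \<le> w"
      then have "u \<in> B" using assms(1,3,4) w unfolding is_interval_1 by (meson less_imp_le not_le)
      then show False using assms(2,5) by auto
    qed
  qed
  then have bb: "bdd_below B" by (auto simp: bdd_below_def)
  have "u \<le> Inf B" using lb assms(3) by (intro cInf_greatest) auto
  moreover have "Inf B \<le> v" using bb assms(3) by (rule cInf_lower[rotated])
  ultimately show ?thesis using bb assms(3) by auto
qed

lemma sigma_pl:
  fixes \<sigma> :: "real \<Rightarrow> real"
  assumes cont: "continuous_on UNIV \<sigma>" and ap: "affine_pieces_le \<sigma> p"
  shows "\<exists>Q. finite Q \<and> card Q \<le> p - 1 \<and> pl \<sigma> Q"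
proof -
  obtain I where int: "\<forall>i<p. is_interval (I i)" and dis: "\<forall>i<p. \<forall>j<p. i \<noteq> j \<longrightarrow> I i \<inter> I j = {}"
    and un: "(\<Union>i<p. I i) = UNIV" and aff: "\<forall>i<p. \<exists>a b. \<forall>x\<in>I i. \<sigma> x = a * x + b"
    using ap unfolding affine_pieces_le_def by blast
  have "\<exists>i0<p. \<not> bdd_below (I i0)"
  proof (rule ccontr)
    assume "\<not> (\<exists>i0<p. \<not> bdd_below (I i0))"
    then have "bdd_below (\<Union>i<p. I i)" by simp
    then show False using un by (simp add: bdd_below_def) (meson gt_ex lt_ex not_le)
  qed
  then obtain i0 where i0: "i0 < p" "\<not> bdd_below (I i0)" by auto
  define J where "J = {i. i < p \<and> I i \<noteq> {} \<and> bdd_below (I i)}"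
  define Q where "Q = (\<lambda>i. Inf (I i)) ` J"
  have J: "J \<subseteq> {..<p} - {i0}" using i0 by (auto simp: J_def)
  have fQ: "finite Q" unfolding Q_def using J by (meson finite_Diff finite_lessThan finite_imageI finite_subset)
  have "card Q \<le> card J" unfolding Q_def by (rule card_image_le) (use J in \<open>meson finite_Diff finite_lessThan finite_subset\<close>)
  also have "\<dots> \<le> card ({..<p} - {i0})" using J by (intro card_mono) auto
  also have "\<dots> = p - 1" using i0 by simp
  finally have cQ: "card Q \<le> p - 1" .
  have "pl \<sigma> Q" unfolding pl_def
  proof (intro allI impI)
    fix a b :: real assume ab: "a < b" and free: "Q \<inter> {a<..<b} = {}"
    define m where "m = (a+b)/2"
    have m: "a < m" "m < b" using ab by (auto simp: m_def)
    obtain i where i: "i < p" "m \<in> I i" using un by (metis UNIV_I UN_E lessThan_iff)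
    have sub: "{a<..<b} \<subseteq> I i"
    proof
      fix x assume x: "x \<in> {a<..<b}"
      show "x \<in> I i"
      proof (rule ccontr)
        assume xn: "x \<notin> I i"
        obtain j where j: "j < p" "x \<in> I j" using un by (metis UNIV_I UN_E lessThan_iff)
        have ij: "i \<noteq> j" using xn j by auto
        have "x \<noteq> m" using xn i by auto
        then consider "x < m" | "m < x" by linarith
        then show False
        proof cases
          case 1
          have "I j \<inter> I i = {}" using dis i j ij by auto
          then have r: "I i \<noteq> {} \<and> bdd_below (I i) \<and> x \<le> Inf (I i) \<and> Inf (I i) \<le> m"
            using inf_between[of "I i" x "I j" m] int i j 1 by auto
          then have "Inf (I i) \<in> Q" unfolding Q_def J_def using i by auto
          then show False using free r x m by auto
        next
          case 2
          have "I i \<inter> I j = {}" using dis i j ij by auto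
          then have r: "I j \<noteq> {} \<and> bdd_below (I j) \<and> m \<le> Inf (I j) \<and> Inf (I j) \<le> x"
            using inf_between[of "I j" m "I i" x] int i j 2 by auto
          then have "Inf (I j) \<in> Q" unfolding Q_def J_def using j by auto
          then show False using free r x m by auto
        qed
      qed
    qed
    obtain c d where cd: "\<forall>x\<in>I i. \<sigma> x = c * x + d" using aff i by blast
    have "closed {x. \<sigma> x = c * x + d}"
      by (rule closed_Collect_eq[OF cont]) (intro continuous_intros)
    moreover have "{a<..<b} \<subseteq> {x. \<sigma> x = c * x + d}" using sub cd by auto
    ultimately have "closure {a<..<b} \<subseteq> {x. \<sigma> x = c * x + d}" by (rule closure_minimal[rotated])
    then have "\<forall>t\<in>{a..b}. \<sigma> t = c*t + d" using ab by auto
    then show "\<exists>c d. \<forall>t\<in>{a..b}. \<sigma> t = c * t + d" by blast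
  qed
  then show ?thesis using fQ cQ by blast
qed


lemma pl_scale: "pl f S \<Longrightarrow> pl (\<lambda>t. k * f t) S"
  using pl_scale_add[of f S k 0] by simp

lemma pl_comp_bound:
  fixes g \<sigma> :: "real \<Rightarrow> real"
  assumes "pl g T" "finite T" "card T \<le> nT" "pl \<sigma> Q" "finite Q" "card Q \<le> q"
  shows "\<exists>S'. finite S' \<and> card S' \<le> nT + q * (nT + 1) \<and> pl (\<lambda>t. \<sigma> (g t)) S'"
proof -
  obtain S' where S': "finite S'" "card S' \<le> card T + card Q * (card T + 1)" "pl (\<lambda>t. \<sigma> (g t)) S'"
    using pl_comp[OF assms(1,2,4,5)] by blast
  have "card T + card Q * (card T + 1) \<le> nT + q * (nT + 1)"
    using assms(3,6) by (intro add_mono mult_le_mono) auto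
  then show ?thesis using S' by auto
qed

lemma alt_sign: "((-1::real)^(Suc j) - (-1)^j) * ((-1)^(Suc (Suc j)) - (-1)^(Suc j)) < 0"
  by (cases "even j") simp_all

theorem corollary2:
  fixes \<sigma> :: "real \<Rightarrow> real" and p d1 d2 k1 k2 :: nat and \<alpha>1 \<alpha>2 :: real
  assumes "continuous_on UNIV \<sigma>"
    and "linear_pieces \<sigma> p" and "p \<ge> 2"
    and "d1 \<ge> 1" and "d2 \<ge> 1"
    and "0 < \<alpha>1" and "\<alpha>1 \<le> 1" and "0 < \<alpha>2" and "\<alpha>2 \<le> 1"
    and "\<alpha>1 * real d1 = real k1" and "k1 \<ge> 1"
    and "\<alpha>2 * real d2 = real k2" and "k2 \<ge> 1"
    and "memorizes TYPE('n::finite) \<sigma> k1 k2 N"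
  shows "real N \<le> \<alpha>1 * \<alpha>2 * real d1 * real d2 * real p * (real p - 1)
                   + \<alpha>2 * real d2 * (real p - 1) + 2"
proof -
  define q where "q = p - 1"
  have pq: "real p - 1 = real q" using assms(3) by (simp add: q_def of_nat_diff)
  obtain Q where Q: "finite Q" "card Q \<le> q" "pl \<sigma> Q"
    using sigma_pl[OF assms(1)] assms(2) unfolding linear_pieces_def q_def by blast
  define B where "B = k2 * (k1 * q + q * (k1 * q + 1))"
  have main: "N \<le> B + 2"
  proof (cases "N = 0")
    case True then show ?thesis by simp
  next
    case Nz: False
    define e :: "real^'n" where "e = (\<chi> i. 1)"
    have e0: "e \<noteq> 0" unfolding e_def by (metis vec_lambda_beta zero_index zero_neq_one)
    define X :: "nat \<Rightarrow> real^'n" where "X i = real i *\<^sub>R e" for i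
    define y :: "nat \<Rightarrow> real" where "y i = (-1)^i" for i
    have "inj_on X {..<N}" unfolding X_def using e0 by (auto simp: inj_on_def)
    moreover have "\<forall>i<N. y i \<in> {-1..1}"
    proof (intro allI impI)
      fix i show "y i \<in> {-1..1}" unfolding y_def by (cases "even i") auto
    qed
    ultimately obtain W1 b1 W2 b2 W3 b3 where W: "\<forall>i<N. net2 \<sigma> k1 k2 W1 b1 W2 b2 W3 b3 (X i) = y i"
      using assms(14) unfolding memorizes_def by blast
    define h where "h j t = \<sigma> ((W1 j \<bullet> e) * t + b1 j)" for j t
    define u where "u m t = (\<Sum>j<k1. W2 m j * h j t) + b2 m" for m t
    define f where "f t = (\<Sum>m<k2. W3 m * \<sigma> (u m t)) + b3" for t
    have fX: "f (real i) = y i" if "i < N" for i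
    proof -
      have "f (real i) = net2 \<sigma> k1 k2 W1 b1 W2 b2 W3 b3 (X i)"
        unfolding f_def u_def h_def net2_def X_def by (simp add: mult.commute)
      then show ?thesis using W that by simp
    qed
    have "\<forall>j. \<exists>S. finite S \<and> card S \<le> 0 + q * (0 + 1) \<and> pl (h j) S"
    proof
      fix j
      show "\<exists>S. finite S \<and> card S \<le> 0 + q * (0 + 1) \<and> pl (h j) S"
        unfolding h_def by (rule pl_comp_bound[OF pl_affine _ _ Q(3) Q(1) Q(2)]) auto
    qed
    then have "\<forall>j. \<exists>S. finite S \<and> card S \<le> q \<and> pl (h j) S" by simp
    from choice[OF this] obtain S1 where S1: "\<forall>j. finite (S1 j) \<and> card (S1 j) \<le> q \<and> pl (h j) (S1 j)" by blast
    have "\<forall>m. \<exists>S. finite S \<and> card S \<le> k1 * q + q * (k1 * q + 1) \<and> pl (\<lambda>t. \<sigma> (u m t)) S"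
    proof
      fix m
      have "\<forall>j\<in>{..<k1}. pl (\<lambda>t. W2 m j * h j t) (S1 j)" using S1 pl_scale by blast
      from pl_scale_add[OF pl_sum[OF finite_lessThan this], of 1 "b2 m"]
      have plu: "pl (u m) (\<Union>j\<in>{..<k1}. S1 j)"
        unfolding u_def by simp
      have cu: "finite (\<Union>j\<in>{..<k1}. S1 j) \<and> card (\<Union>j\<in>{..<k1}. S1 j) \<le> card {..<k1} * q"
        by (rule card_UN_bound) (use S1 in auto)
      show "\<exists>S. finite S \<and> card S \<le> k1 * q + q * (k1 * q + 1) \<and> pl (\<lambda>t. \<sigma> (u m t)) S"
        by (rule pl_comp_bound[OF plu _ _ Q(3) Q(1) Q(2)]) (use cu in auto)
    qed
    from choice[OF this] obtain S2 where S2: "\<forall>m. finite (S2 m) \<and> card (S2 m) \<le> k1 * q + q * (k1 * q + 1) \<and> pl (\<lambda>t. \<sigma> (u m t)) (S2 m)" by blast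
    define S where "S = (\<Union>m\<in>{..<k2}. S2 m)"
    have "\<forall>m\<in>{..<k2}. pl (\<lambda>t. W3 m * \<sigma> (u m t)) (S2 m)" using S2 pl_scale by blast
    from pl_scale_add[OF pl_sum[OF finite_lessThan this], of 1 b3]
    have plf: "pl f S"
      unfolding f_def S_def by simp
    have cS: "finite S \<and> card S \<le> card {..<k2} * (k1 * q + q * (k1 * q + 1))"
      unfolding S_def by (rule card_UN_bound) (use S2 in auto)
    define n where "n = N - 1"
    have "n \<le> card S + 1"
    proof (rule zig[where S=S and R="real n" and f=f and x="\<lambda>j. real j" and n=n])
      show "finite S" using cS by simp
    next
      fix a b assume "a < b" "b \<le> real n" "S \<inter> {a<..<b} = {}"
      then show "\<exists>c d. \<forall>t\<in>{a..b}. f t = c * t + d" using plf unfolding pl_def by blast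
    next
      fix j assume j: "j + 2 \<le> n"
      have "f (real (Suc j)) = (-1)^(Suc j)" "f (real j) = (-1)^j" "f (real (Suc (Suc j))) = (-1)^(Suc (Suc j))"
        using fX[of j] fX[of "Suc j"] fX[of "Suc (Suc j)"] j Nz unfolding n_def y_def by auto
      then show "(f (real (Suc j)) - f (real j)) * (f (real (Suc (Suc j))) - f (real (Suc j))) < 0"
        using alt_sign[of j] by simp
    qed auto
    moreover have "card S \<le> B" using cS unfolding B_def by simp
    ultimately show ?thesis using Nz unfolding n_def by linarith
  qed
  have rN: "real N \<le> real B + 2" using main by (metis of_nat_add of_nat_le_iff of_nat_numeral)
  have rB: "real B = (real k1 * real k2) * (real q + 1) * real q + real k2 * real q"
    unfolding B_def by (simp add: algebra_simps)
  have kk: "real k1 * real k2 = \<alpha>1 * \<alpha>2 * real d1 * real d2"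
    using assms(10,12) by (metis mult.assoc mult.left_commute)
  have pp: "real p = real q + 1" using pq by simp
  have "\<alpha>1 * \<alpha>2 * real d1 * real d2 * real p * (real p - 1) + \<alpha>2 * real d2 * (real p - 1) + 2
        = (real k1 * real k2) * (real q + 1) * real q + real k2 * real q + 2"
    unfolding kk pq pp assms(12) by simp
  then show ?thesis using rN rB by linarith
qed

end
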